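(* Let $\mathcal H$ be the Hilbert space of $n$ qubits. Let $\mathsf H_0=\{|\Psi\rangle\langle\Psi| : |\Psi\rangle=|\phi\rangle\otimes|\psi\rangle,\ |\phi\rangle,|\psi\rangle\in\mathcal H\text{ unit vectors}\}$ and, for $\varepsilon\ge0$, $\mathsf H_1^{\varepsilon}=\{|\Psi\rangle\langle\Psi| : |\Psi\rangle\in\mathcal H^{\otimes2},\ \max_{|\phi\rangle,|\psi\rangle\in\mathcal H}F(|\Psi\rangle\langle\Psi|,|\phi\rangle\langle\phi|\otimes|\psi\rangle\langle\psi|)\le1-\varepsilon\}$. Then for every $0\le\varepsilon\le 1-2^{-n/2}$ and every POVM $\{M_0,M_1\}$ on $\mathcal H^{\otimes2}$, $$\sup_{\rho\in\mathsf H_0}\operatorname{tr}(M_1\rho)+\sup_{\rho\in\mathsf H_1^{\varepsilon}}\operatorname{tr}(M_0\rho)\ \ge\ 1,$$ i.e., no measurement distinguishes $\mathsf H_0$ from $\mathsf H_1^\varepsilon$ better than guessing at random.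
   Context: The fidelity of density operators is $F(\rho,\sigma)=\operatorname{tr}\sqrt{\sqrt\rho\,\sigma\sqrt\rho}$; for pure states $F(|a\rangle\langle a|,|b\rangle\langle b|)=|\langle a|b\rangle|$. A POVM $\{M_0,M_1\}$ is a pair of positive semidefinite operators with $M_0+M_1=I$; outcome $i$ (meaning "the state is in the $i$th set") occurs with probability $\operatorname{tr}(M_i\rho)$. *)

theory Defs
  imports "Jordan_Normal_Form.Matrix" "Jordan_Normal_Form.Schur_Decomposition"
begin

definition qdim :: "nat \<Rightarrow> nat" where
  "qdim n = 2 ^ n"

definition unit_vec_in :: "nat \<Rightarrow> complex vec \<Rightarrow> bool" where
  "unit_vec_in d v \<longleftrightarrow> v \<in> carrier_vec d \<and> v \<bullet>c v = 1"

(* tensor product of vectors: C^d (x) C^e = C^(d*e), index (i,j) |-> i*e + j *)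
definition tensor_vec :: "complex vec \<Rightarrow> complex vec \<Rightarrow> complex vec" where
  "tensor_vec a b = vec (dim_vec a * dim_vec b)
      (\<lambda>k. a $ (k div dim_vec b) * b $ (k mod dim_vec b))"

definition tensor_mat :: "complex mat \<Rightarrow> complex mat \<Rightarrow> complex mat" where
  "tensor_mat A B = mat (dim_row A * dim_row B) (dim_col A * dim_col B)
      (\<lambda>(i,j). A $$ (i div dim_row B, j div dim_col B) * B $$ (i mod dim_row B, j mod dim_col B))"

definition proj :: "complex vec \<Rightarrow> complex mat" where
  "proj v = mat (dim_vec v) (dim_vec v) (\<lambda>(i,j). v $ i * cnj (v $ j))"

definition mtrace :: "complex mat \<Rightarrow> complex" where
  "mtrace A = (\<Sum>i<dim_row A. A $$ (i,i))"

definition psd :: "nat \<Rightarrow> complex mat \<Rightarrow> bool" where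
  "psd d M \<longleftrightarrow> M \<in> carrier_mat d d \<and> mat_adjoint M = M \<and>
     (\<forall>v \<in> carrier_vec d. Im ((M *\<^sub>v v) \<bullet>c v) = 0 \<and> Re ((M *\<^sub>v v) \<bullet>c v) \<ge> 0)"

definition povm2 :: "nat \<Rightarrow> complex mat \<Rightarrow> complex mat \<Rightarrow> bool" where
  "povm2 d M0 M1 \<longleftrightarrow> psd d M0 \<and> psd d M1 \<and> M0 + M1 = 1\<^sub>m d"

(* probability of outcome M on state rho: tr(M rho) (real for psd M and density rho) *)
definition prob :: "complex mat \<Rightarrow> complex mat \<Rightarrow> real" where
  "prob M \<rho> = Re (mtrace (M * \<rho>))"

(* fidelity of pure states: F(|a><a|,|b><b|) = |<a|b>| *)
definition pure_fidelity :: "complex vec \<Rightarrow> complex vec \<Rightarrow> real" where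
  "pure_fidelity a b = cmod (b \<bullet>c a)"

definition H0 :: "nat \<Rightarrow> complex mat set" where
  "H0 n = {proj (tensor_vec \<phi> \<psi>) | \<phi> \<psi>. unit_vec_in (qdim n) \<phi> \<and> unit_vec_in (qdim n) \<psi>}"

(* max over unit phi, psi of F(|Psi><Psi|, |phi><phi| (x) |psi><psi|);
   note |phi><phi| (x) |psi><psi| = |phi (x) psi><phi (x) psi| *)
definition max_prod_fidelity :: "nat \<Rightarrow> complex vec \<Rightarrow> real" where
  "max_prod_fidelity n \<Psi> = Sup {pure_fidelity \<Psi> (tensor_vec \<phi> \<psi>) | \<phi> \<psi>.
       unit_vec_in (qdim n) \<phi> \<and> unit_vec_in (qdim n) \<psi>}"

definition H1 :: "nat \<Rightarrow> real \<Rightarrow> complex mat set" where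
  "H1 n \<epsilon> = {proj \<Psi> | \<Psi>. unit_vec_in (qdim n * qdim n) \<Psi> \<and>
       max_prod_fidelity n \<Psi> \<le> 1 - \<epsilon>}"

end

theory Submission
  imports Defs
begin

lemma sum_diag:
  fixes f :: "nat \<Rightarrow> 'a::comm_monoid_add"
  assumes "\<And>k. k < d*d \<Longrightarrow> k div d \<noteq> k mod d \<Longrightarrow> f k = 0"
  shows "(\<Sum>k<d*d. f k) = (\<Sum>i<d. f (i*d+i))"
proof -
  let ?S = "(\<lambda>i. i*d+i) ` {..<d}"
  have sub: "?S \<subseteq> {..<d*d}"
  proof
    fix k assume "k \<in> ?S"
    then obtain i where i: "i < d" "k = i*d+i" by auto
    have "i*d + i < i*d + d" using i by simp
    also have "\<dots> = (i+1)*d" by simp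
    also have "\<dots> \<le> d*d" using i by (intro mult_right_mono) auto
    finally show "k \<in> {..<d*d}" using i by simp
  qed
  have "(\<Sum>k<d*d. f k) = (\<Sum>k\<in>?S. f k)"
  proof (rule sum.mono_neutral_right[OF _ sub])
    show "\<forall>k\<in>{..<d*d} - ?S. f k = 0"
    proof
      fix k assume k: "k \<in> {..<d*d} - ?S"
      show "f k = 0"
      proof (rule assms)
        show "k < d*d" using k by auto
        show "k div d \<noteq> k mod d"
        proof
          assume e: "k div d = k mod d"
          have "k = (k div d)*d + k mod d" by simp
          hence "k = (k div d)*d + k div d" using e by simp
          moreover have "k div d < d" using k by (auto simp: less_mult_imp_div_less)
          ultimately have "k \<in> ?S" by blast
          thus False using k by blast
        qed
      qed
    qed
  qed auto
  also have "\<dots> = (\<Sum>i<d. f (i*d+i))"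
  proof (rule sum.reindex_cong[where l="\<lambda>i. i*d+i"])
    show "inj_on (\<lambda>i. i*d+i) {..<d}"
    proof (rule inj_onI)
      fix i j assume e: "i*d+i = j*d+j"
      thus "i = j"
      proof (cases i j rule: linorder_cases)
        case less
        hence "i + i*d < j + j*d" by (intro add_less_le_mono) auto
        thus ?thesis using e by simp
      next
        case greater
        hence "j + j*d < i + i*d" by (intro add_less_le_mono) auto
        thus ?thesis using e by simp
      qed
    qed
  qed auto
  finally show ?thesis .
qed

lemma diag_div[simp]: "i < d \<Longrightarrow> (i*d+i) div (d::nat) = i"
  by simp
lemma diag_mod[simp]: "i < d \<Longrightarrow> (i*d+i) mod (d::nat) = i"
  by simp
lemma diag_lt: "i < d \<Longrightarrow> i*d+i < (d::nat)*d"
proof -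
  assume i: "i < d"
  have "i*d + i < i*d + d" using i by simp
  also have "\<dots> = (i+1)*d" by simp
  also have "\<dots> \<le> d*d" using i by (intro mult_right_mono) auto
  finally show ?thesis .
qed

definition diagv :: "nat \<Rightarrow> (nat \<Rightarrow> complex) \<Rightarrow> complex vec" where
  "diagv d a = vec (d*d) (\<lambda>k. if k div d = k mod d then a (k div d) else 0)"

lemma diagv_carrier[simp]: "diagv d a \<in> carrier_vec (d*d)" "dim_vec (diagv d a) = d*d"
  by (auto simp: diagv_def)

lemma diagv_idx: "i < d \<Longrightarrow> diagv d a $ (i*d+i) = a i"
  using diag_lt[of i d] by (simp add: diagv_def)

lemma mult_diagv_idx:
  assumes M: "M \<in> carrier_mat (d*d) (d*d)" and k: "k < d*d"
  shows "(M *\<^sub>v diagv d a) $ k = (\<Sum>j<d. M $$ (k, j*d+j) * a j)"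
proof -
  have "(M *\<^sub>v diagv d a) $ k = (\<Sum>l<d*d. M $$ (k,l) * diagv d a $ l)"
    using M k by (simp add: mult_mat_vec_def scalar_prod_def row_def atLeast0LessThan)
  also have "\<dots> = (\<Sum>j<d. M $$ (k, j*d+j) * diagv d a $ (j*d+j))"
    by (rule sum_diag) (simp add: diagv_def)
  also have "\<dots> = (\<Sum>j<d. M $$ (k, j*d+j) * a j)"
    by (simp add: diagv_idx)
  finally show ?thesis .
qed

lemma quad_diagv:
  assumes M: "M \<in> carrier_mat (d*d) (d*d)"
  shows "(M *\<^sub>v diagv d a) \<bullet>c diagv d a =
     (\<Sum>i<d. \<Sum>j<d. M $$ (i*d+i, j*d+j) * a j * cnj (a i))"
proof -
  have "(M *\<^sub>v diagv d a) \<bullet>c diagv d a = (\<Sum>k<d*d. (M *\<^sub>v diagv d a) $ k * cnj (diagv d a $ k))"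
    by (simp add: scalar_prod_def atLeast0LessThan)
  also have "\<dots> = (\<Sum>i<d. (M *\<^sub>v diagv d a) $ (i*d+i) * cnj (diagv d a $ (i*d+i)))"
    by (rule sum_diag) (simp add: diagv_def)
  also have "\<dots> = (\<Sum>i<d. \<Sum>j<d. M $$ (i*d+i, j*d+j) * a j * cnj (a i))"
    by (rule sum.cong) (auto simp: diagv_idx mult_diagv_idx[OF M] diag_lt sum_distrib_right)
  finally show ?thesis .
qed

lemma trace_proj:
  assumes M: "M \<in> carrier_mat D D" and v: "v \<in> carrier_vec D"
  shows "mtrace (M * proj v) = (M *\<^sub>v v) \<bullet>c v"
proof -
  have "mtrace (M * proj v) = (\<Sum>i<D. \<Sum>k<D. M $$ (i,k) * (v $ k * cnj (v $ i)))"
    using M v by (auto simp: mtrace_def proj_def scalar_prod_def row_def col_def atLeast0LessThan intro!: sum.cong)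
  also have "\<dots> = (\<Sum>i<D. (\<Sum>k<D. M $$ (i,k) * v $ k) * cnj (v $ i))"
    by (auto simp: sum_distrib_right mult.assoc intro!: sum.cong)
  also have "\<dots> = (M *\<^sub>v v) \<bullet>c v"
    using M v by (auto simp: scalar_prod_def row_def atLeast0LessThan intro!: sum.cong)
  finally show ?thesis .
qed

lemma sum_prod_index:
  fixes f :: "nat \<Rightarrow> 'a::comm_monoid_add"
  shows "(\<Sum>k<a*b. f k) = (\<Sum>i<a. \<Sum>j<b. f (i*b+j))"
proof -
  have "(\<Sum>k<a*b. f k) = (\<Sum>i<a. sum f {i*b..<i*b+b})"
    by (rule sum.nat_group[symmetric])
  also have "\<dots> = (\<Sum>i<a. \<Sum>j<b. f (i*b+j))"
  proof (rule sum.cong[OF refl])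
    fix i
    have "sum f {i*b..<i*b+b} = sum f {0+i*b..<b+i*b}" by (simp add: add.commute)
    also have "\<dots> = (\<Sum>j=0..<b. f (j + i*b))" by (rule sum.shift_bounds_nat_ivl)
    also have "\<dots> = (\<Sum>j<b. f (i*b+j))" by (simp add: atLeast0LessThan add.commute)
    finally show "sum f {i*b..<i*b+b} = (\<Sum>j<b. f (i*b+j))" .
  qed
  finally show ?thesis .
qed

lemma tensor_idx:
  assumes "dim_vec \<psi> = d" "i < dim_vec \<phi>" "j < d"
  shows "tensor_vec \<phi> \<psi> $ (i*d+j) = \<phi> $ i * \<psi> $ j"
proof -
  have "i*d+j < dim_vec \<phi> * d"
  proof -
    have "i*d + j < i*d + d" using assms by simp
    also have "\<dots> = (i+1)*d" by simp
    also have "\<dots> \<le> dim_vec \<phi> * d" using assms by (intro mult_right_mono) auto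
    finally show ?thesis .
  qed
  thus ?thesis using assms by (simp add: tensor_vec_def)
qed

lemma unit_tensor:
  assumes "unit_vec_in d \<phi>" "unit_vec_in d \<psi>"
  shows "unit_vec_in (d*d) (tensor_vec \<phi> \<psi>)"
proof -
  have dp: "dim_vec \<phi> = d" "dim_vec \<psi> = d" using assms by (auto simp: unit_vec_in_def)
  have dt: "dim_vec (tensor_vec \<phi> \<psi>) = d*d" using dp by (simp add: tensor_vec_def)
  have "tensor_vec \<phi> \<psi> \<bullet>c tensor_vec \<phi> \<psi> =
     (\<Sum>k<d*d. tensor_vec \<phi> \<psi> $ k * cnj (tensor_vec \<phi> \<psi> $ k))"
    using dt by (simp add: scalar_prod_def atLeast0LessThan)
  also have "\<dots> = (\<Sum>i<d. \<Sum>j<d. (\<phi> $ i * cnj (\<phi> $ i)) * (\<psi> $ j * cnj (\<psi> $ j)))"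
    unfolding sum_prod_index
  proof (intro sum.cong refl)
    fix i j assume ij: "i \<in> {..<d}" "j \<in> {..<d}"
    have "tensor_vec \<phi> \<psi> $ (i*d+j) = \<phi> $ i * \<psi> $ j" by (rule tensor_idx) (use dp ij in auto)
    thus "tensor_vec \<phi> \<psi> $ (i*d+j) * cnj (tensor_vec \<phi> \<psi> $ (i*d+j)) = (\<phi> $ i * cnj (\<phi> $ i)) * (\<psi> $ j * cnj (\<psi> $ j))"
      by (simp add: algebra_simps)
  qed
  also have "\<dots> = (\<Sum>i<d. \<phi> $ i * cnj (\<phi> $ i)) * (\<Sum>j<d. \<psi> $ j * cnj (\<psi> $ j))"
    by (simp add: sum_product)
  also have "\<dots> = (\<phi> \<bullet>c \<phi>) * (\<psi> \<bullet>c \<psi>)"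
    using dp by (simp add: scalar_prod_def atLeast0LessThan)
  also have "\<dots> = 1" using assms by (simp add: unit_vec_in_def)
  finally have "tensor_vec \<phi> \<psi> \<bullet>c tensor_vec \<phi> \<psi> = 1" .
  moreover have "tensor_vec \<phi> \<psi> \<in> carrier_vec (d*d)" using dt by (rule carrier_vecI)
  ultimately show ?thesis unfolding unit_vec_in_def by blast
qed

lemma tensor_diagv:
  assumes "dim_vec \<phi> = d" "dim_vec \<psi> = d"
  shows "tensor_vec \<phi> \<psi> \<bullet>c diagv d a = (\<Sum>i<d. \<phi> $ i * \<psi> $ i * cnj (a i))"
proof -
  have "tensor_vec \<phi> \<psi> \<bullet>c diagv d a = (\<Sum>k<d*d. tensor_vec \<phi> \<psi> $ k * cnj (diagv d a $ k))"
    by (simp add: scalar_prod_def atLeast0LessThan)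
  also have "\<dots> = (\<Sum>i<d. tensor_vec \<phi> \<psi> $ (i*d+i) * cnj (diagv d a $ (i*d+i)))"
    by (rule sum_diag) (simp add: diagv_def)
  also have "\<dots> = (\<Sum>i<d. \<phi> $ i * \<psi> $ i * cnj (a i))"
    using assms by (intro sum.cong refl) (simp add: tensor_idx diagv_idx)
  finally show ?thesis .
qed

lemma unit_normsq:
  assumes "unit_vec_in d \<phi>"
  shows "(\<Sum>i<d. (cmod (\<phi> $ i))^2) = 1"
proof -
  have dp: "dim_vec \<phi> = d" using assms by (auto simp: unit_vec_in_def)
  have "complex_of_real (\<Sum>i<d. (cmod (\<phi> $ i))^2) = (\<Sum>i<d. \<phi> $ i * cnj (\<phi> $ i))"
    unfolding of_real_sum by (intro sum.cong refl) (rule complex_norm_square)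
  also have "\<dots> = \<phi> \<bullet>c \<phi>" using dp by (simp add: scalar_prod_def atLeast0LessThan)
  also have "\<dots> = 1" using assms by (simp add: unit_vec_in_def)
  finally show ?thesis by (metis of_real_eq_1_iff)
qed

lemma fid_bound:
  assumes "unit_vec_in d \<phi>" "unit_vec_in d \<psi>" and s: "\<And>i. s i = 1 \<or> s i = -1"
  shows "cmod (tensor_vec \<phi> \<psi> \<bullet>c diagv d (\<lambda>i. complex_of_real (s i / sqrt d))) \<le> 1 / sqrt d"
proof -
  have dp: "dim_vec \<phi> = d" "dim_vec \<psi> = d" using assms by (auto simp: unit_vec_in_def)
  have "cmod (tensor_vec \<phi> \<psi> \<bullet>c diagv d (\<lambda>i. complex_of_real (s i / sqrt d)))
     = cmod (\<Sum>i<d. \<phi> $ i * \<psi> $ i * cnj (complex_of_real (s i / sqrt d)))"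
    using dp by (simp add: tensor_diagv)
  also have "\<dots> \<le> (\<Sum>i<d. cmod (\<phi> $ i * \<psi> $ i * cnj (complex_of_real (s i / sqrt d))))"
    by (rule norm_sum)
  also have "\<dots> = (\<Sum>i<d. cmod (\<phi> $ i) * cmod (\<psi> $ i) * (1 / sqrt d))"
  proof (intro sum.cong refl)
    fix i
    have "\<bar>s i\<bar> = 1" using s[of i] by auto
    thus "cmod (\<phi> $ i * \<psi> $ i * cnj (complex_of_real (s i / sqrt d))) = cmod (\<phi> $ i) * cmod (\<psi> $ i) * (1 / sqrt d)"
      by (simp add: norm_mult norm_divide)
  qed
  also have "\<dots> \<le> (\<Sum>i<d. ((cmod (\<phi> $ i))^2 + (cmod (\<psi> $ i))^2) / 2 * (1 / sqrt d))"
  proof (intro sum_mono mult_right_mono)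
    fix i
    have "0 \<le> (cmod (\<phi> $ i) - cmod (\<psi> $ i))^2" by simp
    thus "cmod (\<phi> $ i) * cmod (\<psi> $ i) \<le> ((cmod (\<phi> $ i))^2 + (cmod (\<psi> $ i))^2) / 2"
      by (simp add: power2_eq_square algebra_simps)
  qed simp
  also have "\<dots> = (\<Sum>i<d. ((cmod (\<phi> $ i))^2 + (cmod (\<psi> $ i))^2) / (2 * sqrt d))"
    by (intro sum.cong refl) simp
  also have "\<dots> = (\<Sum>i<d. (cmod (\<phi> $ i))^2 + (cmod (\<psi> $ i))^2) / (2 * sqrt d)"
    by (rule sum_divide_distrib[symmetric])
  also have "\<dots> = ((\<Sum>i<d. (cmod (\<phi> $ i))^2) + (\<Sum>i<d. (cmod (\<psi> $ i))^2)) / (2 * sqrt d)"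
    by (simp only: sum.distrib)
  also have "\<dots> = 1 / sqrt d" using unit_normsq[OF assms(1)] unit_normsq[OF assms(2)] by simp
  finally show ?thesis .
qed

lemma signs_exist:
  fixes H :: "nat \<Rightarrow> nat \<Rightarrow> real"
  shows "\<exists>s. (\<forall>i. s i = 1 \<or> s i = -1) \<and> (\<Sum>i<m. H i i) \<le> (\<Sum>i<m. \<Sum>j<m. s i * s j * H i j)"
proof (induction m)
  case 0
  show ?case by (rule exI[of _ "\<lambda>_. 1"]) simp
next
  case (Suc m)
  then obtain s where s: "\<forall>i. s i = 1 \<or> s i = -1"
    and le: "(\<Sum>i<m. H i i) \<le> (\<Sum>i<m. \<Sum>j<m. s i * s j * H i j)" by blast
  define t where "t = (\<Sum>j<m. s j * (H m j + H j m))"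
  define c :: real where "c = (if t \<ge> 0 then 1 else -1)"
  define s' where "s' = s(m := c)"
  have s's: "\<And>i. i < m \<Longrightarrow> s' i = s i" by (simp add: s'_def)
  have s'm: "s' m = c" by (simp add: s'_def)
  have ct: "0 \<le> c * t" by (simp add: c_def)
  have cc: "c * c = 1" by (simp add: c_def)
  have "(\<Sum>i<Suc m. \<Sum>j<Suc m. s' i * s' j * H i j)
      = (\<Sum>i<m. \<Sum>j<m. s' i * s' j * H i j) + (\<Sum>i<m. s' i * s' m * H i m)
        + ((\<Sum>j<m. s' m * s' j * H m j) + s' m * s' m * H m m)"
    by (simp add: sum.distrib)
  also have "\<dots> = (\<Sum>i<m. \<Sum>j<m. s i * s j * H i j) + c * t + H m m"
    by (simp add: s's s'm cc t_def sum_distrib_left sum.distrib algebra_simps)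
  finally have eq: "(\<Sum>i<Suc m. \<Sum>j<Suc m. s' i * s' j * H i j) = (\<Sum>i<m. \<Sum>j<m. s i * s j * H i j) + c * t + H m m" .
  show ?case
  proof (intro exI conjI)
    show "\<forall>i. s' i = 1 \<or> s' i = -1" using s by (simp add: s'_def c_def)
    show "(\<Sum>i<Suc m. H i i) \<le> (\<Sum>i<Suc m. \<Sum>j<Suc m. s' i * s' j * H i j)"
      using eq le ct by simp
  qed
qed



lemma pow_half: "1 / sqrt (real (2^n)) = 2 powr (- real n / 2)"
proof -
  have e1: "real (2^n) = 2 powr real n" by (simp add: powr_realpow)
  have "sqrt (real (2^n)) = (real (2^n)) powr (1/2)" by (rule powr_half_sqrt[symmetric]) simp
  also have "\<dots> = (2 powr real n) powr (1/2)" by (simp only: e1)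
  also have "\<dots> = 2 powr (real n * (1/2))" by (rule powr_powr)
  also have "\<dots> = 2 powr (real n / 2)" by simp
  finally have e2: "sqrt (real (2^n)) = 2 powr (real n / 2)" .
  have "2 powr (- real n / 2) = 2 powr (- (real n / 2))" by (simp only: minus_divide_left)
  also have "\<dots> = inverse (2 powr (real n / 2))" by (rule powr_minus)
  also have "\<dots> = 1 / sqrt (real (2^n))" by (simp only: e2 inverse_eq_divide)
  finally show ?thesis by (rule sym)
qed

lemma unit_vec_unit: "i < d \<Longrightarrow> unit_vec_in d (unit_vec d i)"
  by (simp add: unit_vec_in_def scalar_prod_left_unit)

lemma tensor_unit_diagv:
  assumes "i < d"
  shows "tensor_vec (unit_vec d i) (unit_vec d i) = diagv d (\<lambda>j. if j = i then 1 else 0)"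
proof (rule eq_vecI)
  show "dim_vec (tensor_vec (unit_vec d i) (unit_vec d i)) = dim_vec (diagv d (\<lambda>j. if j = i then 1 else 0))"
    by (simp add: tensor_vec_def)
  fix k assume "k < dim_vec (diagv d (\<lambda>j. if j = i then 1 else 0))"
  hence k: "k < d*d" by simp
  have d0: "0 < d" using assms by simp
  have kd: "k div d < d" using k by (simp add: less_mult_imp_div_less)
  have km: "k mod d < d" using d0 by simp
  show "tensor_vec (unit_vec d i) (unit_vec d i) $ k = diagv d (\<lambda>j. if j = i then 1 else 0) $ k"
    using k kd km assms by (auto simp: tensor_vec_def diagv_def)
qed


lemma dsum:
  assumes i: "i < (d::nat)"
  shows "(\<Sum>i'<d. \<Sum>j<d. X i' j * (if j = i then (1::complex) else 0) * cnj (if i' = i then 1 else 0)) = X i i"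
proof -
  have "(\<Sum>i'<d. \<Sum>j<d. X i' j * (if j = i then (1::complex) else 0) * cnj (if i' = i then 1 else 0))
     = (\<Sum>i'<d. if i' = i then (\<Sum>j<d. if j = i then X i' j else 0) else 0)"
  proof (intro sum.cong refl)
    fix i'
    show "(\<Sum>j<d. X i' j * (if j = i then (1::complex) else 0) * cnj (if i' = i then 1 else 0))
       = (if i' = i then (\<Sum>j<d. if j = i then X i' j else 0) else 0)"
    proof (cases "i' = i")
      case True
      have "(\<Sum>j<d. X i' j * (if j = i then (1::complex) else 0) * cnj (if i' = i then 1 else 0))
         = (\<Sum>j<d. if j = i then X i' j else 0)" by (rule sum.cong) (auto simp: True)
      thus ?thesis using True by (simp only: simp_thms(6) if_True)
    next
      case False thus ?thesis by simp
    qed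
  qed
  also have "\<dots> = X i i" using i by simp
  finally show ?thesis .
qed

theorem corollary6p2:
  fixes n :: nat and \<epsilon> :: real and M0 M1 :: "complex mat"
  assumes "0 \<le> \<epsilon>" and "\<epsilon> \<le> 1 - 2 powr (- real n / 2)"
    and "povm2 (qdim n * qdim n) M0 M1"
  shows "(SUP \<rho>\<in>H0 n. prob M1 \<rho>) + (SUP \<rho>\<in>H1 n \<epsilon>. prob M0 \<rho>) \<ge> 1"
proof -
  obtain d where dq: "qdim n = d" by blast
  have d0: "0 < d" using dq by (auto simp: qdim_def)
  have M0: "M0 \<in> carrier_mat (d*d) (d*d)" and M1: "M1 \<in> carrier_mat (d*d) (d*d)"
    and sumM: "M0 + M1 = 1\<^sub>m (d*d)" and p0: "psd (d*d) M0" and p1: "psd (d*d) M1"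
    using assms(3) dq by (auto simp: povm2_def psd_def)
  have prob_eq: "prob M (proj v) = Re ((M *\<^sub>v v) \<bullet>c v)"
    if "M \<in> carrier_mat (d*d) (d*d)" "v \<in> carrier_vec (d*d)" for M v
    using that by (simp add: prob_def trace_proj)
  have nonneg: "0 \<le> prob M (proj v)" if "psd (d*d) M" "v \<in> carrier_vec (d*d)" for M v
  proof -
    have "M \<in> carrier_mat (d*d) (d*d)" using that by (simp add: psd_def)
    thus ?thesis using that prob_eq unfolding psd_def by auto
  qed
  have sum1: "prob M0 (proj v) + prob M1 (proj v) = 1" if u: "unit_vec_in (d*d) v" for v
  proof -
    have v: "v \<in> carrier_vec (d*d)" and vv: "v \<bullet>c v = 1" using u by (auto simp: unit_vec_in_def)
    have "(M0 *\<^sub>v v) \<bullet>c v + (M1 *\<^sub>v v) \<bullet>c v = (M0 *\<^sub>v v + M1 *\<^sub>v v) \<bullet>c v"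
      using M0 M1 v by (simp add: add_scalar_prod_distrib[of _ "d*d"])
    also have "\<dots> = ((M0+M1) *\<^sub>v v) \<bullet>c v" using M0 M1 v by (simp add: add_mult_distrib_mat_vec)
    also have "\<dots> = 1" using sumM vv v by simp
    finally have "(M0 *\<^sub>v v) \<bullet>c v + (M1 *\<^sub>v v) \<bullet>c v = 1" .
    hence "Re ((M0 *\<^sub>v v) \<bullet>c v) + Re ((M1 *\<^sub>v v) \<bullet>c v) = 1"
      by (metis one_complex.simps(1) plus_complex.simps(1))
    thus ?thesis using prob_eq M0 M1 v by simp
  qed
  have le1: "prob M0 (proj v) \<le> 1" "prob M1 (proj v) \<le> 1" if u: "unit_vec_in (d*d) v" for v
  proof -
    have v: "v \<in> carrier_vec (d*d)" using u by (auto simp: unit_vec_in_def)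
    show "prob M0 (proj v) \<le> 1" "prob M1 (proj v) \<le> 1"
      using sum1[OF u] nonneg[OF p0 v] nonneg[OF p1 v] by linarith+
  qed
  define A where "A = (SUP \<rho>\<in>H0 n. prob M1 \<rho>)"
  define B where "B = (SUP \<rho>\<in>H1 n \<epsilon>. prob M0 \<rho>)"
  have bddA: "bdd_above (prob M1 ` H0 n)"
  proof (rule bdd_aboveI[of _ 1])
    fix x assume "x \<in> prob M1 ` H0 n"
    then obtain \<phi> \<psi> where u: "unit_vec_in d \<phi>" "unit_vec_in d \<psi>" and x: "x = prob M1 (proj (tensor_vec \<phi> \<psi>))"
      by (auto simp: H0_def dq)
    show "x \<le> 1" using x le1(2)[OF unit_tensor[OF u]] by simp
  qed
  have bddB: "bdd_above (prob M0 ` H1 n \<epsilon>)"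
  proof (rule bdd_aboveI[of _ 1])
    fix x assume "x \<in> prob M0 ` H1 n \<epsilon>"
    then obtain \<Psi> where u: "unit_vec_in (d*d) \<Psi>" and x: "x = prob M0 (proj \<Psi>)"
      by (auto simp: H1_def dq)
    show "x \<le> 1" using x le1(1)[OF u] by simp
  qed
  define H where "H = (\<lambda>i j. Re (M0 $$ (i*d+i, j*d+j)))"
  have gi: "1 - A \<le> H i i" if i: "i < d" for i
  proof -
    let ?a = "\<lambda>j. if j = i then (1::complex) else 0"
    let ?v = "tensor_vec (unit_vec d i) (unit_vec d i)"
    have uv: "unit_vec_in (d*d) ?v" using unit_tensor[OF unit_vec_unit[OF i] unit_vec_unit[OF i]] .
    have "proj ?v \<in> H0 n" using unit_vec_unit[OF i] by (auto simp: H0_def dq)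
    hence "prob M1 (proj ?v) \<le> A" unfolding A_def using bddA by (rule cSUP_upper)
    moreover have "prob M0 (proj ?v) = H i i"
    proof -
      have "prob M0 (proj ?v) = Re ((M0 *\<^sub>v diagv d ?a) \<bullet>c diagv d ?a)"
        using prob_eq[OF M0] by (simp add: tensor_unit_diagv[OF i])
      also have "\<dots> = Re (\<Sum>i'<d. \<Sum>j<d. M0 $$ (i'*d+i', j*d+j) * ?a j * cnj (?a i'))"
        by (simp only: quad_diagv[OF M0])
      also have "\<dots> = H i i" using dsum[OF i, where X="\<lambda>i' j. M0 $$ (i'*d+i', j*d+j)"] by (simp add: H_def del: Re_sum)
      finally show ?thesis .
    qed
    ultimately show ?thesis using sum1[OF uv] by linarith
  qed
  obtain s where s: "\<And>i. s i = 1 \<or> s i = -1"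
    and sle: "(\<Sum>i<d. H i i) \<le> (\<Sum>i<d. \<Sum>j<d. s i * s j * H i j)"
    using signs_exist[of H d] by blast
  define a where "a = (\<lambda>i. complex_of_real (s i / sqrt d))"
  define \<Psi> where "\<Psi> = diagv d a"
  have ss: "s i * s i = 1" for i using s[of i] by auto
  have aa: "a j * cnj (a i) = complex_of_real (s i * s j / d)" for i j
  proof -
    have "s j / sqrt d * (s i / sqrt d) = s j * s i / (sqrt d * sqrt d)" by (rule times_divide_times_eq)
    also have "\<dots> = s i * s j / d" by (simp add: mult.commute)
    finally have r: "s j / sqrt d * (s i / sqrt d) = s i * s j / d" .
    have "a j * cnj (a i) = complex_of_real (s j / sqrt d * (s i / sqrt d))"
      by (simp only: a_def complex_cnj_complex_of_real of_real_mult[symmetric])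
    thus ?thesis by (simp only: r)
  qed
  have uPsi: "unit_vec_in (d*d) \<Psi>"
  proof -
    have "\<Psi> \<bullet>c \<Psi> = (\<Sum>k<d*d. \<Psi> $ k * cnj (\<Psi> $ k))"
      by (simp add: \<Psi>_def scalar_prod_def atLeast0LessThan)
    also have "\<dots> = (\<Sum>i<d. \<Psi> $ (i*d+i) * cnj (\<Psi> $ (i*d+i)))"
      by (rule sum_diag) (simp add: \<Psi>_def diagv_def)
    also have "\<dots> = (\<Sum>i<d. complex_of_real (1 / d))"
    proof (intro sum.cong refl)
      fix i assume "i \<in> {..<d}"
      hence "\<Psi> $ (i*d+i) * cnj (\<Psi> $ (i*d+i)) = a i * cnj (a i)" by (simp add: \<Psi>_def diagv_idx)
      also have "\<dots> = complex_of_real (s i * s i / d)" by (rule aa)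
      also have "\<dots> = complex_of_real (1 / d)" by (simp only: ss)
      finally show "\<Psi> $ (i*d+i) * cnj (\<Psi> $ (i*d+i)) = complex_of_real (1 / d)" .
    qed
    also have "\<dots> = 1" using d0 by simp
    finally show ?thesis by (simp add: unit_vec_in_def \<Psi>_def)
  qed
  have fid: "max_prod_fidelity n \<Psi> \<le> 1 - \<epsilon>"
  proof -
    have "max_prod_fidelity n \<Psi> \<le> 1 / sqrt d"
      unfolding max_prod_fidelity_def
    proof (rule cSup_least)
      show "{pure_fidelity \<Psi> (tensor_vec \<phi> \<psi>) | \<phi> \<psi>. unit_vec_in (qdim n) \<phi> \<and> unit_vec_in (qdim n) \<psi>} \<noteq> {}"
        using unit_vec_unit[OF d0] dq by blast
      fix x assume "x \<in> {pure_fidelity \<Psi> (tensor_vec \<phi> \<psi>) | \<phi> \<psi>. unit_vec_in (qdim n) \<phi> \<and> unit_vec_in (qdim n) \<psi>}"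
      then obtain \<phi> \<psi> where u: "unit_vec_in d \<phi>" "unit_vec_in d \<psi>" and x: "x = pure_fidelity \<Psi> (tensor_vec \<phi> \<psi>)"
        using dq by blast
      show "x \<le> 1 / sqrt d" using fid_bound[OF u s] x
        by (simp add: pure_fidelity_def \<Psi>_def a_def)
    qed
    also have "1 / sqrt d = 2 powr (- real n / 2)" 
    proof -
      have dd: "d = 2^n" using dq by (simp add: qdim_def)
      show ?thesis unfolding dd by (rule pow_half)
    qed
    finally show ?thesis using assms(2) by linarith
  qed
  have "proj \<Psi> \<in> H1 n \<epsilon>" using uPsi fid dq by (auto simp: H1_def)
  hence PB: "prob M0 (proj \<Psi>) \<le> B" unfolding B_def using bddB by (rule cSUP_upper)
  have "prob M0 (proj \<Psi>) = Re (\<Sum>i<d. \<Sum>j<d. M0 $$ (i*d+i, j*d+j) * a j * cnj (a i))"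
    using prob_eq[OF M0] by (simp add: \<Psi>_def quad_diagv[OF M0])
  also have "\<dots> = Re (\<Sum>i<d. \<Sum>j<d. M0 $$ (i*d+i, j*d+j) * complex_of_real (s i * s j / d))"
    by (simp only: mult.assoc aa)
  also have "\<dots> = (\<Sum>i<d. \<Sum>j<d. H i j * (s i * s j / d))"
    unfolding H_def Re_sum by (intro sum.cong refl) simp
  also have "\<dots> = (\<Sum>i<d. \<Sum>j<d. s i * s j * H i j / d)"
    by (intro sum.cong refl) simp
  also have "\<dots> = (\<Sum>i<d. \<Sum>j<d. s i * s j * H i j) / d"
    by (simp only: sum_divide_distrib)
  finally have P: "prob M0 (proj \<Psi>) = (\<Sum>i<d. \<Sum>j<d. s i * s j * H i j) / d" .
  have dA: "real d * (1 - A) \<le> (\<Sum>i<d. H i i)"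
    using sum_mono[of "{..<d}" "\<lambda>_. 1 - A" "\<lambda>i. H i i"] gi by simp
  have "real d * prob M0 (proj \<Psi>) = (\<Sum>i<d. \<Sum>j<d. s i * s j * H i j)"
    using P d0 by simp
  hence "real d * (1 - A) \<le> real d * prob M0 (proj \<Psi>)" using dA sle by linarith
  hence "1 - A \<le> prob M0 (proj \<Psi>)" using d0 by (simp add: mult_le_cancel_left_pos)
  with PB have "1 \<le> A + B" by linarith
  thus ?thesis by (simp add: A_def B_def)
qed


end
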